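(* There is $p_0$ such that the following holds for every prime $p>p_0$. Let $S\subseteq\mathbb{Z}_p$ with $p/3<|S|<2p/5$, and for $n\in\mathbb{Z}_p$ let $r(n)$ be the number of pairs $(s_1,s_2)\in S\times S$ with $s_1+s_2=n$. Then for every nonempty $T\subseteq\mathbb{Z}_p$, $$\sum_{n\in T} r(n)<0.93\,|S|\,(|S|\,|T|)^{1/2}.$$ *)

theory Defs
  imports Complex_Main "HOL-Computational_Algebra.Primes"
begin

text \<open>Z_p is modelled as the residues {0..<p} with addition modulo p.
  rep_count p S n = number of pairs (s1,s2) in S x S with s1 + s2 = n in Z_p.\<close>

definition rep_count :: "nat \<Rightarrow> nat set \<Rightarrow> nat \<Rightarrow> nat" where
  "rep_count p S n = card {(s1, s2). s1 \<in> S \<and> s2 \<in> S \<and> (s1 + s2) mod p = n}"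

end

theory Submission
  imports Defs "HOL-Number_Theory.Cong"
begin


definition PP :: "nat \<Rightarrow> nat set \<Rightarrow> nat set \<Rightarrow> nat \<Rightarrow> (nat \<times> nat) set" where
  "PP p A B x = {(a, b). a \<in> A \<and> b \<in> B \<and> (a + b) mod p = x}"

definition rc :: "nat \<Rightarrow> nat set \<Rightarrow> nat set \<Rightarrow> nat \<Rightarrow> nat" where
  "rc p A B x = card (PP p A B x)"

definition NN :: "nat \<Rightarrow> nat \<Rightarrow> nat set \<Rightarrow> nat set \<Rightarrow> nat" where
  "NN p t A B = (\<Sum>x<p. min t (rc p A B x))"

lemma rep_rc: "rep_count p S n = rc p S S n"
  unfolding rep_count_def rc_def PP_def by simp

lemma add_mod_inj: "(x::nat) < p \<Longrightarrow> y < p \<Longrightarrow> (x + c) mod p = (y + c) mod p \<Longrightarrow> x = y"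
  by (metis cong_add_rcancel_nat cong_def mod_less)

lemma PP_finite: "finite A \<Longrightarrow> finite B \<Longrightarrow> finite (PP p A B x)"
  by (rule finite_subset[of _ "A \<times> B"]) (auto simp: PP_def)

lemma rc_union_left: "finite X1 \<Longrightarrow> finite X2 \<Longrightarrow> finite Y \<Longrightarrow> X1 \<inter> X2 = {} \<Longrightarrow>
   rc p (X1 \<union> X2) Y x = rc p X1 Y x + rc p X2 Y x"
proof -
  assume f: "finite X1" "finite X2" "finite Y" and d: "X1 \<inter> X2 = {}"
  have "PP p (X1 \<union> X2) Y x = PP p X1 Y x \<union> PP p X2 Y x" by (auto simp: PP_def)
  moreover have "PP p X1 Y x \<inter> PP p X2 Y x = {}" using d by (auto simp: PP_def)
  ultimately show ?thesis unfolding rc_def using f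
    by (simp add: PP_finite card_Un_disjoint)
qed

lemma rc_union_right: "finite X \<Longrightarrow> finite Y1 \<Longrightarrow> finite Y2 \<Longrightarrow> Y1 \<inter> Y2 = {} \<Longrightarrow>
   rc p X (Y1 \<union> Y2) x = rc p X Y1 x + rc p X Y2 x"
proof -
  assume f: "finite X" "finite Y1" "finite Y2" and d: "Y1 \<inter> Y2 = {}"
  have "PP p X (Y1 \<union> Y2) x = PP p X Y1 x \<union> PP p X Y2 x" by (auto simp: PP_def)
  moreover have "PP p X Y1 x \<inter> PP p X Y2 x = {}" using d by (auto simp: PP_def)
  ultimately show ?thesis unfolding rc_def using f
    by (simp add: PP_finite card_Un_disjoint)
qed

lemma sum_rc: assumes "finite A" "finite B" "p > 0"
  shows "(\<Sum>x<p. rc p A B x) = card A * card B"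
proof -
  have "A \<times> B = (\<Union>x\<in>{..<p}. PP p A B x)" using assms(3) by (auto simp: PP_def)
  moreover have "card (\<Union>x\<in>{..<p}. PP p A B x) = (\<Sum>x<p. card (PP p A B x))"
    by (rule card_UN_disjoint) (auto simp: PP_finite assms, auto simp: PP_def)
  ultimately have "card (A \<times> B) = (\<Sum>x<p. card (PP p A B x))" by simp
  thus ?thesis by (simp add: rc_def card_cartesian_product)
qed

lemma rc_le: assumes "A \<subseteq> {..<p}" "finite B" shows "rc p A B x \<le> card B"
proof -
  have "inj_on snd (PP p A B x)"
    using assms(1) unfolding inj_on_def PP_def
    by clarsimp (metis add_mod_inj lessThan_iff subsetD)
  moreover have "snd ` PP p A B x \<subseteq> B" by (auto simp: PP_def)
  ultimately show ?thesis unfolding rc_def using assms(2) card_inj_on_le by blast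
qed

lemma modinv1: "(b::nat) < p \<Longrightarrow> e \<le> p \<Longrightarrow> ((b+e) mod p + (p-e)) mod p = b"
proof -
  assume a: "b < p" "e \<le> p"
  have "((b+e) mod p + (p-e)) mod p = (b + e + (p - e)) mod p" by (simp add: mod_add_left_eq)
  also have "b + e + (p - e) = b + p" using a by simp
  finally show ?thesis using a by simp
qed

lemma modinv2: "(a::nat) < p \<Longrightarrow> e \<le> p \<Longrightarrow> ((a + (p-e)) mod p + e) mod p = a"
proof -
  assume a: "a < p" "e \<le> p"
  have "((a + (p-e)) mod p + e) mod p = (a + (p - e) + e) mod p" by (simp add: mod_add_left_eq)
  also have "a + (p - e) + e = a + p" using a by simp
  finally show ?thesis using a by simp
qed

lemma modsum: "(e::nat) \<le> p \<Longrightarrow> ((b+e) mod p + (a + (p-e)) mod p) mod p = (a + b) mod p"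
proof -
  assume a: "e \<le> p"
  have "((b+e) mod p + (a + (p-e)) mod p) mod p = (b + e + (a + (p - e))) mod p" by (simp add: mod_add_eq)
  also have "b + e + (a + (p - e)) = (a + b) + p" using a by simp
  finally show ?thesis by simp
qed

definition gg :: "nat \<Rightarrow> nat \<Rightarrow> nat \<times> nat \<Rightarrow> nat \<times> nat" where
  "gg p e = (\<lambda>(a,b). ((b+e) mod p, (a + (p-e)) mod p))"

lemma gg_inj: "e < p \<Longrightarrow> inj_on (gg p e) ({..<p} \<times> {..<p})"
proof (rule inj_onI)
  fix u v
  assume e: "e < p" and m: "u \<in> {..<p} \<times> {..<p}" "v \<in> {..<p} \<times> {..<p}"
    and eq: "gg p e u = gg p e v"
  obtain a b a' b' where uv: "u = (a,b)" "v = (a',b')" by fastforce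
  from eq have "(b+e) mod p = (b'+e) mod p" "(a + (p-e)) mod p = (a' + (p-e)) mod p"
    unfolding gg_def uv by auto
  thus "u = v" using m add_mod_inj uv by auto
qed

lemma swap_card:
  assumes AB: "A \<subseteq> {..<p}" "B \<subseteq> {..<p}" "e < p"
  defines "TB \<equiv> (\<lambda>b. (b+e) mod p) ` B" and "B1 \<equiv> {b\<in>B. (b+e) mod p \<in> A}"
  shows "rc p (TB - A) B1 x = rc p (A \<inter> TB) (B - B1) x"
proof -
  have fin: "finite A" "finite B" using rev_finite_subset[OF finite_lessThan AB(1)] rev_finite_subset[OF finite_lessThan AB(2)] by this
  have TBsub: "TB \<subseteq> {..<p}" unfolding TB_def using AB by auto
  have finT: "finite TB" unfolding TB_def using fin by simp
  have sub1: "PP p (TB - A) B1 x \<subseteq> {..<p} \<times> {..<p}" using TBsub AB unfolding PP_def B1_def by auto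
  have sub2: "PP p (A \<inter> TB) (B - B1) x \<subseteq> {..<p} \<times> {..<p}" using TBsub AB unfolding PP_def B1_def by auto
  have i1: "gg p e ` PP p (TB - A) B1 x \<subseteq> PP p (A \<inter> TB) (B - B1) x"
  proof
    fix y assume "y \<in> gg p e ` PP p (TB - A) B1 x"
    then obtain a b where y: "y = gg p e (a,b)" and ab: "(a,b) \<in> PP p (TB - A) B1 x" by auto
    from ab obtain b0 where b0: "b0 \<in> B" "a = (b0 + e) mod p" "a \<notin> A" "b \<in> B" "(b+e) mod p \<in> A" "(a+b) mod p = x"
      unfolding PP_def TB_def B1_def by auto
    have b0p: "b0 < p" using b0 AB by auto
    have "(a + (p-e)) mod p = b0" using b0 b0p AB modinv1 by simp
    moreover have "((b+e) mod p + (a + (p-e)) mod p) mod p = x" using modsum AB b0 by simp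
    ultimately show "y \<in> PP p (A \<inter> TB) (B - B1) x"
      using y b0 unfolding gg_def PP_def TB_def B1_def by auto
  qed
  have i2: "gg p e ` PP p (A \<inter> TB) (B - B1) x \<subseteq> PP p (TB - A) B1 x"
  proof
    fix y assume "y \<in> gg p e ` PP p (A \<inter> TB) (B - B1) x"
    then obtain a b where y: "y = gg p e (a,b)" and ab: "(a,b) \<in> PP p (A \<inter> TB) (B - B1) x" by auto
    from ab obtain b0 where b0: "b0 \<in> B" "a = (b0 + e) mod p" "a \<in> A" "b \<in> B" "(b+e) mod p \<notin> A" "(a+b) mod p = x"
      unfolding PP_def TB_def B1_def by auto
    have b0p: "b0 < p" using b0 AB by auto
    have "(a + (p-e)) mod p = b0" using b0 b0p AB modinv1 by simp
    moreover have "((b+e) mod p + (a + (p-e)) mod p) mod p = x" using modsum AB b0 by simp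
    ultimately show "y \<in> PP p (TB - A) B1 x"
      using y b0 unfolding gg_def PP_def TB_def B1_def by auto
  qed
  have inj1: "inj_on (gg p e) (PP p (TB - A) B1 x)" using gg_inj[OF AB(3)] sub1 inj_on_subset by blast
  have inj2: "inj_on (gg p e) (PP p (A \<inter> TB) (B - B1) x)" using gg_inj[OF AB(3)] sub2 inj_on_subset by blast
  have f1: "finite (PP p (TB - A) B1 x)" "finite (PP p (A \<inter> TB) (B - B1) x)"
    using PP_finite fin finT unfolding B1_def by auto
  show ?thesis unfolding rc_def
    using card_inj_on_le[OF inj1 i1 f1(2)] card_inj_on_le[OF inj2 i2 f1(1)] by simp
qed

lemma decomp:
  assumes AB: "A \<subseteq> {..<p}" "B \<subseteq> {..<p}" "e < p"
  defines "TB \<equiv> (\<lambda>b. (b+e) mod p) ` B" and "B1 \<equiv> {b\<in>B. (b+e) mod p \<in> A}"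
  shows "rc p A B x = rc p (A \<union> TB) B1 x + rc p (A - TB) (B - B1) x"
proof -
  have fin: "finite A" "finite B" using rev_finite_subset[OF finite_lessThan AB(1)] rev_finite_subset[OF finite_lessThan AB(2)] by this
  have finT: "finite TB" unfolding TB_def using fin by simp
  have finB1: "finite B1" "finite (B - B1)" unfolding B1_def using fin by auto
  have e1: "rc p A B x = rc p A B1 x + rc p A (B - B1) x"
  proof -
    have "rc p A B x = rc p A (B1 \<union> (B - B1)) x" by (rule arg_cong[where f="\<lambda>Y. rc p A Y x"]) (auto simp: B1_def)
    also have "\<dots> = rc p A B1 x + rc p A (B - B1) x" by (rule rc_union_right) (use fin finB1 in auto)
    finally show ?thesis .
  qed
  have e2: "rc p A (B - B1) x = rc p (A \<inter> TB) (B - B1) x + rc p (A - TB) (B - B1) x"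
  proof -
    have "rc p A (B - B1) x = rc p ((A \<inter> TB) \<union> (A - TB)) (B - B1) x"
      by (rule arg_cong[where f="\<lambda>X. rc p X (B - B1) x"]) auto
    also have "\<dots> = rc p (A \<inter> TB) (B - B1) x + rc p (A - TB) (B - B1) x"
      by (rule rc_union_left) (use fin finB1 in auto)
    finally show ?thesis .
  qed
  have e3: "rc p (A \<union> TB) B1 x = rc p A B1 x + rc p (TB - A) B1 x"
  proof -
    have "rc p (A \<union> TB) B1 x = rc p (A \<union> (TB - A)) B1 x"
      by (rule arg_cong[where f="\<lambda>X. rc p X B1 x"]) auto
    also have "\<dots> = rc p A B1 x + rc p (TB - A) B1 x"
      by (rule rc_union_left) (use fin finB1 finT in auto)
    finally show ?thesis .
  qed
  show ?thesis using e1 e2 e3 swap_card[OF AB, of x] unfolding TB_def B1_def by simp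
qed

lemma translate_inj: "(e::nat) < p \<Longrightarrow> B \<subseteq> {..<p} \<Longrightarrow> inj_on (\<lambda>b. (b+e) mod p) B"
proof (rule inj_onI)
  fix x y assume "e < p" "B \<subseteq> {..<p}" "x \<in> B" "y \<in> B" "(x + e) mod p = (y + e) mod p"
  thus "x = y" using add_mod_inj[of x p y e] by auto
qed

lemma sizes:
  assumes AB: "A \<subseteq> {..<(p::nat)}" "B \<subseteq> {..<p}" "e < p"
  defines "TB \<equiv> (\<lambda>b. (b+e) mod p) ` B" and "B1 \<equiv> {b\<in>B. (b+e) mod p \<in> A}"
  shows "card (A \<union> TB) + card B1 = card A + card B"
    "card (A - TB) = card A - card B1" "card (B - B1) = card B - card B1"
    "card B1 \<le> card A" "card B1 \<le> card B" "card A \<le> card (A \<union> TB)"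
proof -
  have fin: "finite A" "finite B" using rev_finite_subset[OF finite_lessThan AB(1)] rev_finite_subset[OF finite_lessThan AB(2)] by this
  have finT: "finite TB" unfolding TB_def using fin by simp
  have cT: "card TB = card B" unfolding TB_def using card_image translate_inj[OF AB(3,2)] by blast
  have "A \<inter> TB = (\<lambda>b. (b+e) mod p) ` B1" unfolding TB_def B1_def by auto
  moreover have "B1 \<subseteq> {..<p}" using AB(2) unfolding B1_def by auto
  hence "inj_on (\<lambda>b. (b+e) mod p) B1" by (rule translate_inj[OF AB(3)])
  ultimately have cI: "card (A \<inter> TB) = card B1" by (simp add: card_image)
  have "card (A \<union> TB) + card (A \<inter> TB) = card A + card TB" using card_Un_Int[OF fin(1) finT] by simp
  thus "card (A \<union> TB) + card B1 = card A + card B" using cI cT by simp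
  show "card (A - TB) = card A - card B1" using cI card_Diff_subset_Int[of A TB] fin by simp
  show "card (B - B1) = card B - card B1" unfolding B1_def using fin
    by (subst card_Diff_subset) auto
  have "card (A \<inter> TB) \<le> card A" using fin by (intro card_mono) auto
  thus "card B1 \<le> card A" using cI by simp
  show "card B1 \<le> card B" unfolding B1_def using fin by (intro card_mono) auto
  show "card A \<le> card (A \<union> TB)" using fin finT by (intro card_mono) auto
qed

lemma exists_e:
  assumes p: "prime (p::nat)" and AB: "A \<subseteq> {..<p}" "B \<subseteq> {..<p}" "A \<noteq> {}" "2 \<le> card B"
    "card A + card B \<le> p"
  shows "\<exists>e<p. 0 < card {b\<in>B. (b+e) mod p \<in> A} \<and> card {b\<in>B. (b+e) mod p \<in> A} < card B"
proof (rule ccontr)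
  assume na: "\<not> ?thesis"
  have fin: "finite A" "finite B" using rev_finite_subset[OF finite_lessThan AB(1)] rev_finite_subset[OF finite_lessThan AB(2)] by this
  have p0: "p > 0" using p prime_gt_0_nat by blast
  have key: "\<forall>b\<in>B. (b+e) mod p \<in> A" if e: "e < p" and ex: "b' \<in> B" "(b'+e) mod p \<in> A" for e b'
  proof -
    have "0 < card {b\<in>B. (b+e) mod p \<in> A}" using ex fin by (subst card_gt_0_iff) auto
    hence "\<not> card {b\<in>B. (b+e) mod p \<in> A} < card B" using na e by blast
    moreover have "{b\<in>B. (b+e) mod p \<in> A} \<subseteq> B" by auto
    ultimately have "{b\<in>B. (b+e) mod p \<in> A} = B" using fin psubset_card_mono by blast
    thus ?thesis by blast
  qed
  obtain b1 b2 where b12: "b1 \<in> B" "b2 \<in> B" "b1 \<noteq> b2"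
  proof -
    have "B \<noteq> {}" using AB(4) by auto
    then obtain b1 where "b1 \<in> B" by blast
    moreover have "card (B - {b1}) \<ge> 1" using AB(4) fin calculation by simp
    hence "B - {b1} \<noteq> {}" by (metis card.empty not_one_le_zero)
    then obtain b2 where "b2 \<in> B - {b1}" by blast
    ultimately show ?thesis using that by blast
  qed
  have b12p: "b1 < p" "b2 < p" using b12 AB by auto
  define d where "d = (b2 + (p - b1)) mod p"
  have dne: "d \<noteq> 0"
  proof
    assume "d = 0"
    show False
    proof (cases "b1 < b2")
      case True
      hence "b2 + (p - b1) = (b2 - b1) + p" using b12p by simp
      hence "d = (b2 - b1 + p) mod p" unfolding d_def by simp
      also have "\<dots> = (b2 - b1) mod p" by (rule mod_add_self2)
      also have "\<dots> = b2 - b1" using b12p by (intro mod_less) linarith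
      finally have "d = b2 - b1" .
      thus False using True \<open>d = 0\<close> by linarith
    next
      case False
      hence "b2 + (p - b1) < p" "0 < b2 + (p - b1)" using b12 b12p by auto
      hence "d = b2 + (p - b1)" unfolding d_def by (intro mod_less)
      thus False using \<open>d = 0\<close> \<open>0 < b2 + (p - b1)\<close> by linarith
    qed
  qed
  have dp: "d < p" unfolding d_def using p0 by simp
  have step: "(a + d) mod p \<in> A" if a: "a \<in> A" for a
  proof -
    define e where "e = (a + (p - b1)) mod p"
    have ap: "a < p" using a AB by auto
    have ep: "e < p" unfolding e_def using p0 by simp
    have "(b1 + e) mod p = (b1 + (a + (p - b1))) mod p" unfolding e_def by (simp add: mod_add_right_eq)
    also have "b1 + (a + (p - b1)) = a + p" using b12p by simp
    finally have "(b1 + e) mod p = a" using ap by simp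
    hence "\<forall>b\<in>B. (b+e) mod p \<in> A" using key[OF ep b12(1)] a by simp
    hence "(b2 + e) mod p \<in> A" using b12 by blast
    moreover have "(b2 + e) mod p = (a + d) mod p"
    proof -
      have "(b2 + e) mod p = (b2 + (a + (p - b1))) mod p" unfolding e_def by (simp add: mod_add_right_eq)
      moreover have "(a + d) mod p = (a + (b2 + (p - b1))) mod p" unfolding d_def by (simp add: mod_add_right_eq)
      ultimately show ?thesis by (simp add: add_ac)
    qed
    ultimately show ?thesis by (simp add: power2_eq_square)
  qed
  obtain a0 where a0: "a0 \<in> A" using AB by auto
  have orb: "(a0 + k*d) mod p \<in> A" for k
  proof (induction k)
    case 0 then show ?case using a0 AB by auto
  next
    case (Suc k)
    have "a0 + Suc k * d = (a0 + k*d) + d" by simp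
    hence "(a0 + Suc k * d) mod p = ((a0 + k*d) mod p + d) mod p" by (simp only: mod_add_left_eq)
    then show ?case using step[OF Suc] by simp
  qed
  have cop: "coprime d p" using p dne dp
  proof -
    have "\<not> p dvd d" using dne dp by (auto dest: dvd_imp_le)
    hence "coprime p d" using p by (intro prime_imp_coprime)
    thus ?thesis by (simp only: coprime_commute)
  qed
  have "inj_on (\<lambda>k. (a0 + k*d) mod p) {..<p}"
  proof (rule inj_onI)
    fix k1 k2 assume k: "k1 \<in> {..<p}" "k2 \<in> {..<p}" "(a0 + k1*d) mod p = (a0 + k2*d) mod p"
    hence "[a0 + k1*d = a0 + k2*d] (mod p)" by (simp add: cong_def)
    hence "[k1*d = k2*d] (mod p)" by (metis cong_add_lcancel_nat)
    hence "[k1 = k2] (mod p)" using cop cong_mult_rcancel_nat by blast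
    thus "k1 = k2" using k by (simp add: cong_def)
  qed
  hence "card ((\<lambda>k. (a0 + k*d) mod p) ` {..<p}) = p" by (simp add: card_image)
  moreover have "(\<lambda>k. (a0 + k*d) mod p) ` {..<p} \<subseteq> A" using orb by auto
  ultimately have "p \<le> card A" using fin by (metis card_mono)
  thus False using AB by simp
qed

lemma arith_id:
  fixes u t a b :: nat
  assumes "u \<le> t" "t \<le> a" "t \<le> b"
  shows "u*(a+b-u) + (t-u)*((a-u)+(b-u)-(t-u)) = t*(a+b-t)"
proof -
  obtain v a' b' where "t = u + v" "a = t + a'" "b = t + b'" using assms le_Suc_ex by metis
  thus ?thesis by (simp add: algebra_simps)
qed

lemma pollard:
  assumes p: "prime p"
  shows "A \<subseteq> {..<p} \<Longrightarrow> B \<subseteq> {..<p} \<Longrightarrow> card A + card B \<le> p \<Longrightarrow> t \<le> card A \<Longrightarrow> t \<le> card B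
    \<Longrightarrow> t * (card A + card B - t) \<le> NN p t A B"
proof (induction "card B" arbitrary: A B t rule: less_induct)
  case less
  have fin: "finite A" "finite B" using rev_finite_subset[OF finite_lessThan less.prems(1)] rev_finite_subset[OF finite_lessThan less.prems(2)] by this
  have p0: "p > 0" using p prime_gt_0_nat by blast
  show ?case
  proof (cases "t = 0")
    case True thus ?thesis by simp
  next
    case tpos: False
    show ?thesis
    proof (cases "card B \<le> 1")
      case True
      hence cB: "card B = 1" "t = 1" using tpos less.prems by auto
      have "NN p t A B = (\<Sum>x<p. rc p A B x)" unfolding NN_def
        using rc_le[OF less.prems(1) fin(2)] cB by (intro sum.cong) (auto simp: min_def intro: le_antisym)
      also have "\<dots> = card A" using sum_rc[OF fin p0] cB by simp
      finally show ?thesis using cB by simp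
    next
      case False
      hence B2: "2 \<le> card B" by simp
      have Ane: "A \<noteq> {}" using tpos less.prems by auto
      obtain e where e: "e < p" "0 < card {b\<in>B. (b+e) mod p \<in> A}" "card {b\<in>B. (b+e) mod p \<in> A} < card B"
        using exists_e[OF p less.prems(1,2) Ane B2 less.prems(3)] by blast
      define TB where "TB = (\<lambda>b. (b+e) mod p) ` B"
      define B1 where "B1 = {b\<in>B. (b+e) mod p \<in> A}"
      define u where "u = card B1"
      note sz = sizes[OF less.prems(1,2) e(1), folded TB_def B1_def, folded u_def]
      have dec: "rc p A B x = rc p (A \<union> TB) B1 x + rc p (A - TB) (B - B1) x" for x
        using decomp[OF less.prems(1,2) e(1)] unfolding TB_def B1_def by blast
      have A1sub: "A \<union> TB \<subseteq> {..<p}" using less.prems(1) p0 unfolding TB_def by auto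
      have B1sub: "B1 \<subseteq> {..<p}" using less.prems(2) unfolding B1_def by auto
      have A2sub: "A - TB \<subseteq> {..<p}" using less.prems(1) by auto
      have B2sub: "B - B1 \<subseteq> {..<p}" using less.prems(2) by auto
      have ult: "u < card B" "0 < u" using e unfolding u_def B1_def by auto
      show ?thesis
      proof (cases "t \<le> u")
        case True
        have "t * (card (A \<union> TB) + card B1 - t) \<le> NN p t (A \<union> TB) B1"
          by (rule less.hyps) (use ult sz True less.prems A1sub B1sub u_def in auto)
        also have "\<dots> \<le> NN p t A B" unfolding NN_def by (intro sum_mono) (simp add: dec)
        finally show ?thesis using sz u_def by simp
      next
        case False
        have h1: "u * (card (A \<union> TB) + card B1 - u) \<le> NN p u (A \<union> TB) B1"
          by (rule less.hyps) (use ult sz less.prems A1sub B1sub u_def in auto)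
        have h2: "(t-u) * (card (A - TB) + card (B - B1) - (t-u)) \<le> NN p (t-u) (A - TB) (B - B1)"
          by (rule less.hyps) (use ult sz less.prems A2sub B2sub u_def in auto)
        have "NN p u (A \<union> TB) B1 + NN p (t-u) (A - TB) (B - B1) \<le> NN p t A B"
          unfolding NN_def sum.distrib[symmetric] using False by (intro sum_mono) (auto simp add: dec min_def)
        moreover have "u * (card (A \<union> TB) + card B1 - u) + (t-u) * (card (A - TB) + card (B - B1) - (t-u))
           = t * (card A + card B - t)"
          using sz u_def arith_id[of u t "card A" "card B"] False less.prems by simp
        ultimately show ?thesis using h1 h2 by linarith
      qed
    qed
  qed
qed

lemma sqrt_bound:
  fixes s t :: real
  assumes "0 \<le> s" "0 \<le> t" "t \<le> 2*s"
  shows "t*(4*s-t) \<le> 3.08 * s * sqrt (s*t)"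
proof -
  have L0: "0 \<le> t*(4*s-t)" using assms by simp
  have id: "t*(256*s^3 - 27*t*(4*s-t)^2) = t*((3*t-4*s)^2*(16*s-3*t))" by (simp add: algebra_simps power2_eq_square power3_eq_cube)
  have "0 \<le> t*((3*t-4*s)^2*(16*s-3*t))" using assms by simp
  hence h: "27*(t*(4*s-t))^2 \<le> 256*(s^2*(s*t))"
    using id by (simp add: algebra_simps power2_eq_square power3_eq_cube)
  have st: "0 \<le> s*t" using assms by simp
  have e1: "(3.08 * s * sqrt (s*t))^2 = 5929/625 * (s^2 * (s*t))"
    using st by (simp add: power_mult_distrib power_divide)
  have X: "0 \<le> s^2 * (s*t)" using st by simp
  have "(t*(4*s-t))^2 \<le> (3.08 * s * sqrt (s*t))^2" unfolding e1 using h X by linarith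
  moreover have "0 \<le> 3.08 * s * sqrt (s*t)" using st assms(1) by simp
  ultimately show ?thesis by (rule power2_le_imp_le)
qed



lemma fin_H: "4*(R::real) \<le> L + 1 \<Longrightarrow> L \<le> 3.08*Q \<Longrightarrow> 2 * 1 \<le> Q \<Longrightarrow> R < 0.93*Q" by simp

lemma main_bound:
  assumes p: "prime p" and Sp: "S \<subseteq> {..<p}" and Tp: "T \<subseteq> {..<p}" and Tne: "T \<noteq> {}"
    and s10: "card S \<ge> 2" and s2p: "2 * card S \<le> p"
  shows "real (\<Sum>n\<in>T. rc p S S n) < 0.93 * real (card S) * sqrt (real (card S) * real (card T))"
proof -
  define s where "s = card S"
  define t where "t = card T"
  have finS: "finite S" using rev_finite_subset[OF finite_lessThan Sp] by this
  have finT: "finite T" using rev_finite_subset[OF finite_lessThan Tp] by this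
  have t1: "t \<ge> 1" unfolding t_def using finT Tne by (simp add: Suc_le_eq card_gt_0_iff)
  have p0: "p > 0" using p prime_gt_0_nat by blast
  define j where "j = (2*s - t) div 2"
  have js: "j \<le> s" unfolding j_def by simp
  have pol: "j * (s + s - j) \<le> NN p j S S"
    using pollard[OF p Sp Sp] s2p js unfolding s_def by simp
  define R where "R = (\<Sum>n\<in>T. rc p S S n)"
  have split: "R + NN p j S S \<le> t*j + s*s"
  proof -
    have "R = (\<Sum>n\<in>T. min j (rc p S S n)) + (\<Sum>n\<in>T. rc p S S n - min j (rc p S S n))"
      unfolding R_def sum.distrib[symmetric] by (intro sum.cong) auto
    moreover have "(\<Sum>n\<in>T. min j (rc p S S n)) \<le> t*j"
      unfolding t_def using sum_bounded_above[of T "\<lambda>n. min j (rc p S S n)" j] by simp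
    moreover have "(\<Sum>n\<in>T. rc p S S n - min j (rc p S S n)) \<le> (\<Sum>n<p. rc p S S n - min j (rc p S S n))"
      by (rule sum_mono2) (use Tp in auto)
    moreover have "(\<Sum>n<p. rc p S S n - min j (rc p S S n)) + NN p j S S = s*s"
      unfolding NN_def sum.distrib[symmetric] s_def sum_rc[OF finS finS p0, symmetric]
      by (intro sum.cong) auto
    ultimately show ?thesis by linarith
  qed
  have sr: "real s \<ge> 2" using s10 unfolding s_def by simp
  have tr: "real t \<ge> 1" using t1 by simp
  have Rb: "real R + real j * (2 * real s - real j) \<le> real t * real j + real s * real s"
  proof -
    have e: "real (j * (s + s - j)) = real j * (2 * real s - real j)" using js by (simp add: of_nat_diff)
    have a: "real (j * (s + s - j)) \<le> real (NN p j S S)" using pol by (simp only: of_nat_le_iff)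
    have b: "real (R + NN p j S S) \<le> real (t*j + s*s)" using split by (simp only: of_nat_le_iff)
    have c: "real (R + NN p j S S) = real R + real (NN p j S S)" "real (t*j + s*s) = real t * real j + real s * real s"
      by simp_all
    show ?thesis using a b c e by linarith
  qed
  have "1 * 1 \<le> real s * real t" by (rule mult_mono) (use sr tr in auto)
  hence q1: "sqrt (real s * real t) \<ge> 1" by simp
  have goal: "real R < 0.93 * real s * sqrt (real s * real t)"
  proof (cases "2*s \<le> t")
    case True
    hence "j = 0" unfolding j_def by simp
    hence R1: "real R \<le> real s * real s" using Rb by simp
    have "(real s / 0.93)^2 < real s * real t"
    proof -
      have "(real s / 0.93)^2 = real s * (real s / 0.8649)" by (simp add: power2_eq_square)
      moreover have lt: "real s / 0.8649 < real t" using True sr by (simp add: divide_less_eq)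
      moreover have "real s * (real s / 0.8649) < real s * real t"
        using mult_strict_left_mono[OF lt, of "real s"] sr by linarith
      ultimately show ?thesis by simp
    qed
    hence "real s / 0.93 < sqrt (real s * real t)" by (rule real_less_rsqrt)
    hence "real s < 0.93 * sqrt (real s * real t)" by (simp add: divide_less_eq mult.commute)
    hence "real s * real s < real s * (0.93 * sqrt (real s * real t))" using sr by simp
    thus ?thesis using R1 by (simp add: mult_ac)
  next
    case False
    define m where "m = 2*s - t"
    have mr: "real m = 2 * real s - real t" unfolding m_def using False by (simp add: of_nat_diff)
    have jm: "2*j \<le> m" "m \<le> 2*j + 1" unfolding j_def m_def by auto
    hence d0: "0 \<le> real m - 2 * real j" "real m - 2 * real j \<le> 1" by linarith+
    hence "(real m - 2 * real j)^2 \<le> 1" by (simp add: power_le_one)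
    hence "4 * real R \<le> real t * (4 * real s - real t) + 1"
      using Rb mr by (simp add: algebra_simps power2_eq_square)
    moreover have "real t * (4 * real s - real t) \<le> 3.08 * real s * sqrt (real s * real t)"
      using sqrt_bound[of "real s" "real t"] False sr by simp
    moreover have "2 * 1 \<le> real s * sqrt (real s * real t)" by (rule mult_mono) (use sr q1 in auto)
    ultimately have "real R < 0.93 * (real s * sqrt (real s * real t))"
      by (intro fin_H[of _ "real t * (4 * real s - real t)"]) (simp_all only: mult.assoc)
    thus ?thesis by (simp only: mult.assoc)
  qed
  thus ?thesis unfolding R_def s_def t_def by simp
qed


theorem lemma4:
  "\<exists>p0::nat. \<forall>p::nat. prime p \<and> p > p0 \<longrightarrow>
     (\<forall>S T. S \<subseteq> {0..<p} \<and> real p / 3 < real (card S) \<and> real (card S) < 2 * real p / 5 \<and>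
        T \<subseteq> {0..<p} \<and> T \<noteq> {} \<longrightarrow>
        real (\<Sum>n\<in>T. rep_count p S n) < 0.93 * real (card S) * sqrt (real (card S) * real (card T)))"
proof (intro exI[of _ 30] allI impI)
  fix p :: nat and S T
  assume p: "prime p \<and> 30 < p"
  assume H: "S \<subseteq> {0..<p} \<and> real p / 3 < real (card S) \<and> real (card S) < 2 * real p / 5 \<and>
        T \<subseteq> {0..<p} \<and> T \<noteq> {}"
  have Sp: "S \<subseteq> {..<p}" and Tp: "T \<subseteq> {..<p}" using H by auto
  have "real p > 30" using p by simp
  hence "real (card S) > 10" using H by linarith
  hence s2: "card S \<ge> 2" by simp
  have "5 * real (card S) < 2 * real p" using H by linarith
  hence "5 * card S < 2 * p" by (simp only: of_nat_less_iff[symmetric] of_nat_mult of_nat_numeral)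
  hence sp: "2 * card S \<le> p" by linarith
  have "real (\<Sum>n\<in>T. rc p S S n) < 0.93 * real (card S) * sqrt (real (card S) * real (card T))"
    using main_bound[OF _ Sp Tp _ s2 sp] p H by blast
  thus "real (\<Sum>n\<in>T. rep_count p S n) < 0.93 * real (card S) * sqrt (real (card S) * real (card T))"
    by (simp add: rep_rc)
qed

end
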